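(* Let $L$ be an oriented, ordered, possibly non-compatible virtual link diagram with an affine bilabeling $C$. Then the multi-variable affine index polynomial $p_{(L,C)}$ is an invariant of $(L,C)$ under Reidemeister moves performed away from the starting points of the coloring. Moreover, it is a Vassiliev invariant of order one of the pair $(L,C)$.
   Context: **Diagrams.** A virtual link diagram is an oriented planar diagram of ordered closed curves $L_1,\dots,L_n$ (components) with classical crossings (with over/under information) and virtual crossings. **Crossing conventions.** Draw a classical crossing with both strands oriented upward. - The bottom-left-to-top-right strand has index change $-1$; the bottom-right-to-top-left strand has index change $+1$. - The crossing is positive ($\operatorname{sgn}=+1$) if the overstrand is the bottom-left-to-top-right strand, and negative otherwise. - Self-crossings have both strands on one component; external crossings have strands on different components. - The weight $n_i$ of component $L_i$ is the sum of the index changes of $L_i$ over its passages through external classical crossings. **Affine bilabeling $C$.** - Each component $L_i$ gets a starting point with bilabel $(a^{(i)}_1,a^{(i)}_2)$ of formal integer variables, distinct for different components. - Travel along $L_i$ in its orientation, carrying the bilabel. It is unchanged at virtual crossings. - On passing a classical crossing with index change $\varepsilon$, the first entry changes by $\varepsilon$ at a self-crossing, and the second entry changes by $\varepsilon$ at an external crossing. - On returning to the starting point, the label is $(a^{(i)}_1,a^{(i)}_2+n_i)$. This discrepancy is absorbed at the starting point, which carries the weight $n_i$; the labeling is discontinuous there. **Weights and polynomial.** Let $|(x,y)|=x+y$. With both strands drawn upward: - if $c$ is positive, $W(c)=|\text{bottom-left}|-|\text{top-left}|$; - if $c$ is negative, $W(c)=|\text{bottom-right}|-|\text{top-right}|$.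 Then $p_{(L,C)}(t_1,\dots,t_n)=\sum_c\operatorname{sgn}(c)(t_{o(c)}^{W(c)}-1)$, summed over classical crossings, where $o(c)$ is the component of the overstrand. **Vassiliev invariants.** - Singular virtual links have finitely many double points, assumed away from the starting points. - The extension of an invariant $V$ is $V(L_\times)=V(L_+)-V(L_-)$, with $L_\pm$ the positive/negative resolutions of a double point, applied iteratively. - Colorings of singular links are obtained by treating double points as crossings for label propagation, which is sign-independent. - Order $\le m$ means the extension vanishes on all singular links with more than $m$ double points. - Order one means order $\le 1$ but not order $\le 0$. *)

theory Defs
  imports Main
begin

text \<open>A virtual link diagram (up to the virtual moves, which do not change it) with a
starting point on each component is encoded by its based Gauss diagram:
component i (0-based, ordered) is the list of its passages through classical crossings,
read from the starting point in the direction of the orientation.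
A passage is a pair (c, e): crossing name c and the index change e of that strand at c
(e = -1: bottom-left-to-top-right strand, e = +1: bottom-right-to-top-left strand,
when both strands are drawn upward).
The overstrand of c is the strand with index change -sg c.\<close>

record gdiag =
  comps :: "(nat \<times> int) list list"
  sg :: "nat \<Rightarrow> int"

definition at :: "gdiag \<Rightarrow> nat \<times> nat \<Rightarrow> nat \<times> int" where
  "at D q = comps D ! fst q ! snd q"

definition passages :: "gdiag \<Rightarrow> (nat \<times> nat) set" where
  "passages D = {(i, k). i < length (comps D) \<and> k < length (comps D ! i)}"

definition crossings :: "gdiag \<Rightarrow> nat set" where
  "crossings D = (\<lambda>q. fst (at D q)) ` passages D"

definition wf :: "gdiag \<Rightarrow> bool" where
  "wf D \<longleftrightarrow> (\<forall>q\<in>passages D. snd (at D q) \<in> {-1, 1}) \<and>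
     (\<forall>c\<in>crossings D. sg D c \<in> {-1, 1} \<and>
        (\<forall>e\<in>{-1::int, 1}. \<exists>!q. q \<in> passages D \<and> at D q = (c, e)))"

definition pos :: "gdiag \<Rightarrow> nat \<times> int \<Rightarrow> nat \<times> nat" where
  "pos D x = (THE q. q \<in> passages D \<and> at D q = x)"

definition self_pass :: "gdiag \<Rightarrow> nat \<times> nat \<Rightarrow> bool" where
  "self_pass D q \<longleftrightarrow> fst (pos D (fst (at D q), - snd (at D q))) = fst q"

text \<open>a i = starting bilabel of component i.  lab D a (i, k) is the bilabel carried on
component i just before its k-th passage (k = length gives the label just before
returning to the starting point).\<close>
definition lab :: "gdiag \<Rightarrow> (nat \<Rightarrow> int \<times> int) \<Rightarrow> nat \<times> nat \<Rightarrow> int \<times> int" where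
  "lab D a q =
     (fst (a (fst q)) + (\<Sum>j<snd q. if self_pass D (fst q, j) then snd (at D (fst q, j)) else 0),
      snd (a (fst q)) + (\<Sum>j<snd q. if self_pass D (fst q, j) then 0 else snd (at D (fst q, j))))"

definition absl :: "int \<times> int \<Rightarrow> int" where
  "absl x = fst x + snd x"

definition over_pos :: "gdiag \<Rightarrow> nat \<Rightarrow> nat \<times> nat" where
  "over_pos D c = pos D (c, - sg D c)"

definition under_pos :: "gdiag \<Rightarrow> nat \<Rightarrow> nat \<times> nat" where
  "under_pos D c = pos D (c, sg D c)"

text \<open>W(c) = |incoming label of overstrand| - |outgoing label of understrand|; this is
|bottom-left| - |top-left| for positive and |bottom-right| - |top-right| for negative c.\<close>
definition W :: "gdiag \<Rightarrow> (nat \<Rightarrow> int \<times> int) \<Rightarrow> nat \<Rightarrow> int" where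
  "W D a c = absl (lab D a (over_pos D c))
             - absl (lab D a (fst (under_pos D c), Suc (snd (under_pos D c))))"

definition ocomp :: "gdiag \<Rightarrow> nat \<Rightarrow> nat" where
  "ocomp D c = fst (over_pos D c)"

text \<open>Laurent polynomials in t_0, t_1, ... are coefficient functions on exponent
vectors (nat \<Rightarrow> int).  mono i k is the exponent vector of t_i^k.\<close>
definition mono :: "nat \<Rightarrow> int \<Rightarrow> nat \<Rightarrow> int" where
  "mono i k = (\<lambda>j. if j = i then k else 0)"

definition aff_poly :: "gdiag \<Rightarrow> (nat \<Rightarrow> int \<times> int) \<Rightarrow> (nat \<Rightarrow> int) \<Rightarrow> int" where
  "aff_poly D a m = (\<Sum>c\<in>crossings D. sg D c *
      ((if m = mono (ocomp D c) (W D a c) then 1 else 0) - (if m = (\<lambda>_. 0) then 1 else 0)))"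

definition adj :: "gdiag \<Rightarrow> nat \<times> int \<Rightarrow> nat \<times> int \<Rightarrow> bool" where
  "adj D x y \<longleftrightarrow> (\<exists>i k. i < length (comps D) \<and> Suc k < length (comps D ! i) \<and>
      comps D ! i ! k = x \<and> comps D ! i ! Suc k = y)"

definition delx :: "nat set \<Rightarrow> gdiag \<Rightarrow> (nat \<times> int) list list" where
  "delx C D = map (filter (\<lambda>x. fst x \<notin> C)) (comps D)"

definition r1 :: "gdiag \<Rightarrow> gdiag \<Rightarrow> bool" where
  "r1 D D' \<longleftrightarrow> (\<exists>c e. c \<notin> crossings D \<and> e \<in> {-1, 1} \<and> delx {c} D' = comps D \<and>
      (\<forall>x\<in>crossings D. sg D' x = sg D x) \<and> adj D' (c, e) (c, - e))"

definition r2 :: "gdiag \<Rightarrow> gdiag \<Rightarrow> bool" where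
  "r2 D D' \<longleftrightarrow> (\<exists>c d. c \<noteq> d \<and> c \<notin> crossings D \<and> d \<notin> crossings D \<and>
      delx {c, d} D' = comps D \<and> (\<forall>x\<in>crossings D. sg D' x = sg D x) \<and>
      sg D' d = - sg D' c \<and>
      adj D' (c, - sg D' c) (d, sg D' c) \<and>
      (adj D' (c, sg D' c) (d, - sg D' c) \<or> adj D' (d, - sg D' c) (c, sg D' c)))"

definition swap2 :: "'a \<Rightarrow> 'a \<Rightarrow> 'a \<Rightarrow> 'a" where
  "swap2 u v p = (if p = u then v else if p = v then u else p)"

text \<open>R3: top strand T over both, middle M, bottom B; x = TM, y = TB, z = MB.
eT = 1 iff T passes x before y, eM = 1 iff M passes x before z, eB = 1 iff B passes y
before z.  The sign conditions are exactly the realizability of the triangle.\<close>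
definition r3 :: "gdiag \<Rightarrow> gdiag \<Rightarrow> bool" where
  "r3 D D' \<longleftrightarrow> (\<exists>x y z eT eM eB. distinct [x, y, z] \<and> sg D' = sg D \<and>
      (let Tx = (x, - sg D x); Ty = (y, - sg D y);
           Mx = (x, sg D x); Mz = (z, - sg D z);
           By = (y, sg D y); Bz = (z, sg D z) in
       ((eT = 1 \<and> adj D Tx Ty) \<or> (eT = -1 \<and> adj D Ty Tx)) \<and>
       ((eM = 1 \<and> adj D Mx Mz) \<or> (eM = -1 \<and> adj D Mz Mx)) \<and>
       ((eB = 1 \<and> adj D By Bz) \<or> (eB = -1 \<and> adj D Bz By)) \<and>
       sg D x * sg D y = eM * eB \<and> sg D x * sg D z = eT * eB \<and>
       comps D' = map (map (swap2 Tx Ty \<circ> swap2 Mx Mz \<circ> swap2 By Bz)) (comps D)))"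

text \<open>Renaming crossings (the names carry no geometric meaning).\<close>
definition rename :: "gdiag \<Rightarrow> gdiag \<Rightarrow> bool" where
  "rename D D' \<longleftrightarrow> (\<exists>f. inj_on f (crossings D) \<and>
      comps D' = map (map (apfst f)) (comps D) \<and> (\<forall>c\<in>crossings D. sg D' (f c) = sg D c))"

definition rmove :: "gdiag \<Rightarrow> gdiag \<Rightarrow> bool" where
  "rmove D D' \<longleftrightarrow> wf D \<and> wf D' \<and> (r1 D D' \<or> r2 D D' \<or> r3 D D' \<or> rename D D')"

definition requiv :: "gdiag \<Rightarrow> gdiag \<Rightarrow> bool" where
  "requiv = (\<lambda>D D'. rmove D D' \<or> rmove D' D)\<^sup>*\<^sup>*"

text \<open>A singular diagram is a diagram D together with the set S of crossings that are
double points (their sign in D is ignored).  resolve D S P resolves the double points in P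
positively and those in S - P negatively.\<close>
definition resolve :: "gdiag \<Rightarrow> nat set \<Rightarrow> nat set \<Rightarrow> gdiag" where
  "resolve D S P = D\<lparr>sg := (\<lambda>c. if c \<in> S then (if c \<in> P then 1 else -1) else sg D c)\<rparr>"

definition vext :: "(gdiag \<Rightarrow> (nat \<Rightarrow> int \<times> int) \<Rightarrow> 'm \<Rightarrow> int) \<Rightarrow> gdiag \<Rightarrow> nat set
                    \<Rightarrow> (nat \<Rightarrow> int \<times> int) \<Rightarrow> 'm \<Rightarrow> int" where
  "vext V D S a m = (\<Sum>P\<in>Pow S. (-1) ^ card (S - P) * V (resolve D S P) a m)"

definition vorder_le :: "(gdiag \<Rightarrow> (nat \<Rightarrow> int \<times> int) \<Rightarrow> 'm \<Rightarrow> int) \<Rightarrow> nat \<Rightarrow> bool" where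
  "vorder_le V k \<longleftrightarrow> (\<forall>D S a m. wf D \<and> S \<subseteq> crossings D \<and> card S > k \<longrightarrow> vext V D S a m = 0)"

definition vorder_one :: "(gdiag \<Rightarrow> (nat \<Rightarrow> int \<times> int) \<Rightarrow> 'm \<Rightarrow> int) \<Rightarrow> bool" where
  "vorder_one V \<longleftrightarrow> vorder_le V 1 \<and> \<not> vorder_le V 0"

end

theory Submission
  imports Defs
begin


definition B :: "'a list \<Rightarrow> 'a \<Rightarrow> 'a set" where
  "B xs w = set (takeWhile (\<lambda>y. y \<noteq> w) xs)"

lemma nth_in_take:
  assumes "distinct xs" "j < length xs"
  shows "xs ! j \<in> set (take k xs) \<longleftrightarrow> j < k"
proof
  assume "xs ! j \<in> set (take k xs)"
  then obtain m where m: "m < length (take k xs)" "take k xs ! m = xs ! j"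
    by (auto simp: in_set_conv_nth)
  then have "xs ! m = xs ! j" "m < length xs" "m < k" by auto
  with assms have "m = j" using nth_eq_iff_index_eq by blast
  with \<open>m < k\<close> show "j < k" by simp
next
  assume "j < k"
  then show "xs ! j \<in> set (take k xs)" using assms
    by (metis in_set_conv_nth length_take min_less_iff_conj nth_take)
qed

lemma takeWhile_neq: "x \<notin> set u \<Longrightarrow> takeWhile (\<lambda>y. y \<noteq> x) (u @ x # v) = u"
  by (induction u) auto

lemma B_nth:
  assumes "distinct xs" "k < length xs"
  shows "B xs (xs ! k) = set (take k xs)"
proof -
  have xs: "xs = take k xs @ xs ! k # drop (Suc k) xs"
    using assms(2) by (simp add: id_take_nth_drop)
  have "xs ! k \<notin> set (take k xs)"
    using nth_in_take[OF assms, of k] by simp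
  then have "takeWhile (\<lambda>y. y \<noteq> xs ! k) (take k xs @ xs ! k # drop (Suc k) xs) = take k xs"
    by (rule takeWhile_neq)
  then have "takeWhile (\<lambda>y. y \<noteq> xs ! k) xs = take k xs"
    using xs by metis
  then show ?thesis by (simp add: B_def)
qed

lemma B_filter:
  assumes "P w"
  shows "B (filter P xs) w = B xs w \<inter> Collect P"
proof -
  have "takeWhile (\<lambda>y. y \<noteq> w) (filter P xs) = filter P (takeWhile (\<lambda>y. y \<noteq> w) xs)"
    using assms by (induction xs) auto
  then show ?thesis by (auto simp: B_def)
qed

lemma B_map:
  assumes "inj_on f (insert w (set xs))"
  shows "B (map f xs) (f w) = f ` B xs w"
proof -
  have "takeWhile (\<lambda>y. y \<noteq> f w) (map f xs) = map f (takeWhile (\<lambda>y. y \<noteq> w) xs)"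
    using assms by (induction xs) (auto simp: inj_on_def)
  then show ?thesis by (simp add: B_def)
qed

lemma B_sub: "B xs w \<subseteq> set xs"
  by (auto simp: B_def dest: set_takeWhileD)

lemma B_notin: "w \<notin> B xs w"
  by (auto simp: B_def dest: set_takeWhileD)

definition elems :: "gdiag \<Rightarrow> (nat \<times> int) set" where
  "elems D = (\<Union>xs\<in>set (comps D). set xs)"

lemma elems_iff: "x \<in> elems D \<longleftrightarrow> (\<exists>i<length (comps D). x \<in> set (comps D ! i))"
proof
  assume "x \<in> elems D"
  then obtain xs where "xs \<in> set (comps D)" "x \<in> set xs" by (auto simp: elems_def)
  then show "\<exists>i<length (comps D). x \<in> set (comps D ! i)" by (metis in_set_conv_nth)
next
  assume "\<exists>i<length (comps D). x \<in> set (comps D ! i)"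
  then show "x \<in> elems D" by (auto simp: elems_def)
qed

lemma elems_nth: "x \<in> elems D \<longleftrightarrow> (\<exists>i k. i < length (comps D) \<and> k < length (comps D ! i) \<and> comps D ! i ! k = x)"
  unfolding elems_iff in_set_conv_nth by blast

lemma crossings_elems: "crossings D = fst ` elems D"
  unfolding crossings_def passages_def at_def
  by (force simp: elems_nth image_iff)

lemma finite_elems: "finite (elems D)"
  by (simp add: elems_def)

lemma finite_crossings: "finite (crossings D)"
  by (simp add: crossings_elems finite_elems)

lemma wf_snd:
  assumes "wf D" "x \<in> elems D"
  shows "snd x \<in> {-1, 1}"
  using assms unfolding wf_def passages_def at_def elems_nth by force

lemma wf_pos_nth:
  assumes "wf D" "i < length (comps D)" "k < length (comps D ! i)"
  shows "pos D (comps D ! i ! k) = (i, k)"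
proof -
  let ?x = "comps D ! i ! k"
  have q: "(i, k) \<in> passages D" "at D (i, k) = ?x"
    using assms by (auto simp: passages_def at_def)
  have c: "fst ?x \<in> crossings D"
    using q unfolding crossings_def by force
  have e: "snd ?x \<in> {-1, 1}"
    using assms q unfolding wf_def by force
  have "\<exists>!q. q \<in> passages D \<and> at D q = (fst ?x, snd ?x)"
    using assms(1) c e unfolding wf_def by blast
  then have "\<exists>!q. q \<in> passages D \<and> at D q = ?x" by simp
  then show ?thesis
    unfolding pos_def using q by (metis (mono_tags, lifting) the1_equality)
qed

lemma wf_pos_elem:
  assumes "wf D" "i < length (comps D)" "x \<in> set (comps D ! i)"
  shows "fst (pos D x) = i" "snd (pos D x) < length (comps D ! i)"
        "comps D ! i ! snd (pos D x) = x"
proof -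
  obtain k where k: "k < length (comps D ! i)" "comps D ! i ! k = x"
    using assms(3) by (auto simp: in_set_conv_nth)
  then show "fst (pos D x) = i" "snd (pos D x) < length (comps D ! i)"
        "comps D ! i ! snd (pos D x) = x"
    using wf_pos_nth[OF assms(1,2) k(1)] by auto
qed

lemma wf_distinct:
  assumes "wf D" "i < length (comps D)"
  shows "distinct (comps D ! i)"
  unfolding distinct_conv_nth
  using wf_pos_nth[OF assms] by (metis prod.inject)

lemma wf_unique:
  assumes "wf D" "i < length (comps D)" "j < length (comps D)"
    "x \<in> set (comps D ! i)" "x \<in> set (comps D ! j)"
  shows "i = j"
  using wf_pos_elem(1)[OF assms(1,2,4)] wf_pos_elem(1)[OF assms(1,3,5)] by simp

lemma wf_cross_elem:
  assumes "wf D" "c \<in> crossings D" "e \<in> {-1, 1}"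
  shows "(c, e) \<in> elems D"
proof -
  have "\<exists>!q. q \<in> passages D \<and> at D q = (c, e)"
    using assms unfolding wf_def by blast
  then obtain q where "q \<in> passages D" "at D q = (c, e)" by blast
  then show ?thesis unfolding elems_nth passages_def at_def by (cases q) auto
qed

lemma wf_sg:
  assumes "wf D" "c \<in> crossings D"
  shows "sg D c \<in> {-1, 1}"
  using assms unfolding wf_def by blast

lemma wf_pos:
  assumes "wf D" "x \<in> elems D"
  shows "fst (pos D x) < length (comps D)" "snd (pos D x) < length (comps D ! fst (pos D x))"
        "comps D ! fst (pos D x) ! snd (pos D x) = x" "at D (pos D x) = x"
proof -
  obtain i k where ik: "i < length (comps D)" "k < length (comps D ! i)" "comps D ! i ! k = x"
    using assms(2) by (auto simp: elems_nth)
  then show "fst (pos D x) < length (comps D)" "snd (pos D x) < length (comps D ! fst (pos D x))"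
        "comps D ! fst (pos D x) ! snd (pos D x) = x" "at D (pos D x) = x"
    using wf_pos_nth[OF assms(1) ik(1,2)] by (auto simp: at_def)
qed

definition Bw :: "gdiag \<Rightarrow> nat \<times> int \<Rightarrow> (nat \<times> int) set" where
  "Bw D w = B (comps D ! fst (pos D w)) w"

definition Vf :: "gdiag \<Rightarrow> (nat \<Rightarrow> int \<times> int) \<Rightarrow> nat \<times> int \<Rightarrow> int" where
  "Vf D a w = absl (a (fst (pos D w))) + (\<Sum>y\<in>Bw D w. snd y)"

lemma lab_abs: "absl (lab D a q) = absl (a (fst q)) + (\<Sum>j<snd q. snd (at D (fst q, j)))"
proof -
  have "(\<Sum>j<snd q. if self_pass D (fst q, j) then snd (at D (fst q, j)) else 0) +
        (\<Sum>j<snd q. if self_pass D (fst q, j) then 0 else snd (at D (fst q, j)))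
      = (\<Sum>j<snd q. snd (at D (fst q, j)))"
    by (simp add: sum.distrib[symmetric]) (rule sum.cong, auto)
  then show ?thesis by (simp add: lab_def absl_def)
qed

lemma sum_take:
  assumes "distinct xs" "k \<le> length xs"
  shows "(\<Sum>j<k. snd (xs ! j)) = (\<Sum>y\<in>set (take k xs). snd y)"
  using assms(2)
proof (induction k)
  case 0
  then show ?case by simp
next
  case (Suc k)
  then have k: "k < length xs" by simp
  have "xs ! k \<notin> set (take k xs)" using nth_in_take[OF assms(1) k, of k] by simp
  moreover have "set (take (Suc k) xs) = insert (xs ! k) (set (take k xs))"
    using k by (simp add: take_Suc_conv_app_nth)
  ultimately show ?case using Suc by (simp add: add.commute)
qed

lemma Vf_lab:
  assumes "wf D" "x \<in> elems D"
  shows "Vf D a x = absl (lab D a (pos D x))"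
proof -
  let ?i = "fst (pos D x)" and ?k = "snd (pos D x)"
  have d: "distinct (comps D ! ?i)" using wf_distinct[OF assms(1) wf_pos(1)[OF assms]] .
  have "Bw D x = set (take ?k (comps D ! ?i))"
    unfolding Bw_def using B_nth[OF d wf_pos(2)[OF assms]] wf_pos(3)[OF assms] by simp
  moreover have "(\<Sum>j<?k. snd (at D (?i, j))) = (\<Sum>y\<in>set (take ?k (comps D ! ?i)). snd y)"
    using sum_take[OF d, of ?k] wf_pos(2)[OF assms] by (simp add: at_def)
  ultimately show ?thesis by (simp add: Vf_def lab_abs)
qed

lemma W_Vf:
  assumes "wf D" "c \<in> crossings D"
  shows "W D a c = Vf D a (c, - sg D c) - Vf D a (c, sg D c) - sg D c"
proof -
  have s: "sg D c \<in> {-1, 1}" using wf_sg[OF assms] .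
  have o: "(c, - sg D c) \<in> elems D" and u: "(c, sg D c) \<in> elems D"
    using wf_cross_elem[OF assms] s by auto
  have "absl (lab D a (fst (pos D (c, sg D c)), Suc (snd (pos D (c, sg D c)))))
      = absl (lab D a (pos D (c, sg D c))) + snd (at D (pos D (c, sg D c)))"
    by (simp add: lab_abs)
  also have "\<dots> = Vf D a (c, sg D c) + sg D c"
    using Vf_lab[OF assms(1) u] wf_pos(4)[OF assms(1) u] by simp
  finally show ?thesis
    unfolding W_def over_pos_def under_pos_def using Vf_lab[OF assms(1) o] by simp
qed

lemma Bw_nth:
  assumes "wf D" "i < length (comps D)" "k < length (comps D ! i)"
  shows "Bw D (comps D ! i ! k) = set (take k (comps D ! i))"
  unfolding Bw_def wf_pos_nth[OF assms] using B_nth[OF wf_distinct[OF assms(1,2)] assms(3)] by simp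

lemma adjE:
  assumes "adj D u v"
  obtains i k where "i < length (comps D)" "Suc k < length (comps D ! i)"
    "comps D ! i ! k = u" "comps D ! i ! Suc k = v"
  using assms unfolding adj_def by blast

lemma adj_elems: "adj D u v \<Longrightarrow> u \<in> elems D \<and> v \<in> elems D"
  by (auto elim!: adjE simp: elems_nth intro: Suc_lessD)

lemma adj_V:
  assumes "wf D" "adj D u v"
  shows "Vf D a v = Vf D a u + snd u" "fst (pos D v) = fst (pos D u)"
proof -
  obtain i k where ik: "i < length (comps D)" "Suc k < length (comps D ! i)"
    "comps D ! i ! k = u" "comps D ! i ! Suc k = v" using assms(2) by (rule adjE)
  have pu: "pos D u = (i, k)" using wf_pos_nth[OF assms(1) ik(1), of k] ik by simp
  have pv: "pos D v = (i, Suc k)" using wf_pos_nth[OF assms(1) ik(1) ik(2)] ik by simp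
  have ue: "u \<in> elems D" and ve: "v \<in> elems D" using adj_elems[OF assms(2)] by auto
  show "Vf D a v = Vf D a u + snd u"
    using Vf_lab[OF assms(1) ue] Vf_lab[OF assms(1) ve] pu pv ik
    by (simp add: lab_abs at_def)
  show "fst (pos D v) = fst (pos D u)" using pu pv by simp
qed

lemma adj_B:
  assumes "wf D" "adj D u v" "w \<in> elems D" "w \<noteq> v"
  shows "u \<in> Bw D w \<longleftrightarrow> v \<in> Bw D w"
proof -
  obtain i k where ik: "i < length (comps D)" "Suc k < length (comps D ! i)"
    "comps D ! i ! k = u" "comps D ! i ! Suc k = v" using assms(2) by (rule adjE)
  obtain j m where jm: "j < length (comps D)" "m < length (comps D ! j)" "comps D ! j ! m = w"
    using assms(3) by (auto simp: elems_nth)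
  have Bw: "Bw D w = set (take m (comps D ! j))" using Bw_nth[OF assms(1) jm(1,2)] jm(3) by simp
  show ?thesis
  proof (cases "j = i")
    case True
    have d: "distinct (comps D ! i)" using wf_distinct[OF assms(1) ik(1)] .
    have "m \<noteq> Suc k" using jm ik True assms(4) by auto
    have k1: "k < length (comps D ! i)" using ik(2) by simp
    have "u \<in> Bw D w \<longleftrightarrow> k < m"
      unfolding Bw True using nth_in_take[OF d k1, of m] ik(3) by simp
    moreover have "v \<in> Bw D w \<longleftrightarrow> Suc k < m"
      unfolding Bw True using nth_in_take[OF d ik(2), of m] ik(4) by simp
    ultimately show ?thesis using \<open>m \<noteq> Suc k\<close> by auto
  next
    case False
    have ui: "u \<in> set (comps D ! i)" and vi: "v \<in> set (comps D ! i)"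
      using ik by (auto intro: nth_mem Suc_lessD)
    have "u \<notin> set (comps D ! j)"
    proof
      assume "u \<in> set (comps D ! j)"
      from wf_unique[OF assms(1) ik(1) jm(1) ui this] False show False by simp
    qed
    moreover have "v \<notin> set (comps D ! j)"
    proof
      assume "v \<in> set (comps D ! j)"
      from wf_unique[OF assms(1) ik(1) jm(1) vi this] False show False by simp
    qed
    moreover have "set (take m (comps D ! j)) \<subseteq> set (comps D ! j)" by (rule set_take_subset)
    ultimately have "u \<notin> Bw D w" "v \<notin> Bw D w" unfolding Bw by auto
    then show ?thesis by simp
  qed
qed

lemma adj_B2:
  assumes "wf D" "adj D u v"
  shows "u \<in> Bw D v" "v \<notin> Bw D v"
proof -
  obtain i k where ik: "i < length (comps D)" "Suc k < length (comps D ! i)"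
    "comps D ! i ! k = u" "comps D ! i ! Suc k = v" using assms(2) by (rule adjE)
  have d: "distinct (comps D ! i)" using wf_distinct[OF assms(1) ik(1)] .
  have Bw: "Bw D v = set (take (Suc k) (comps D ! i))" using Bw_nth[OF assms(1) ik(1,2)] ik(4) by simp
  show "u \<in> Bw D v" "v \<notin> Bw D v"
    using Bw ik nth_in_take[OF d, of k "Suc k"] nth_in_take[OF d, of "Suc k" "Suc k"] by auto
qed

definition tm :: "gdiag \<Rightarrow> (nat \<Rightarrow> int \<times> int) \<Rightarrow> nat \<Rightarrow> (nat \<Rightarrow> int) \<Rightarrow> int" where
  "tm D a c m = sg D c * ((if m = mono (ocomp D c) (W D a c) then 1 else 0) - (if m = (\<lambda>_. 0) then 1 else 0))"

lemma aff_tm: "aff_poly D a m = (\<Sum>c\<in>crossings D. tm D a c m)"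
  by (simp add: aff_poly_def tm_def)

lemma Bw_sub: "wf D \<Longrightarrow> w \<in> elems D \<Longrightarrow> Bw D w \<subseteq> elems D"
proof
  fix y assume wfD: "wf D" and w: "w \<in> elems D" and y: "y \<in> Bw D w"
  have "y \<in> set (comps D ! fst (pos D w))" using y B_sub unfolding Bw_def by fast
  then show "y \<in> elems D" using wf_pos(1)[OF wfD w] elems_iff by blast
qed

lemma del_elems:
  assumes "comps D = delx C D'"
  shows "elems D = {y \<in> elems D'. fst y \<notin> C}"
  using assms by (auto simp: elems_def delx_def)

lemma del_crossings:
  assumes "comps D = delx C D'"
  shows "crossings D = crossings D' - C"
  unfolding crossings_elems del_elems[OF assms] by auto

lemma Del:
  assumes "wf D" "wf D'" "comps D = delx C D'" "x \<in> elems D"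
    and zero: "sum snd (Bw D' x \<inter> {y. fst y \<in> C}) = 0"
  shows "Vf D a x = Vf D' a x" "fst (pos D x) = fst (pos D' x)"
proof -
  obtain i where i: "i < length (comps D)" "x \<in> set (comps D ! i)"
    using assms(4) by (auto simp: elems_iff)
  have len: "length (comps D) = length (comps D')" using assms(3) by (simp add: delx_def)
  have ci: "comps D ! i = filter (\<lambda>x. fst x \<notin> C) (comps D' ! i)"
    using assms(3) i len by (simp add: delx_def)
  have i': "i < length (comps D')" "x \<in> set (comps D' ! i)" and P: "fst x \<notin> C"
    using i ci len by auto
  have p: "fst (pos D x) = i" using wf_pos_elem(1)[OF assms(1) i] .
  have p': "fst (pos D' x) = i" using wf_pos_elem(1)[OF assms(2) i'(1,2)] .
  show "fst (pos D x) = fst (pos D' x)" using p p' by simp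
  have "Bw D x = Bw D' x \<inter> {y. fst y \<notin> C}"
    unfolding Bw_def p p' ci using B_filter[of "\<lambda>x. fst x \<notin> C" x] P by simp
  moreover have "sum snd (Bw D' x) = sum snd (Bw D' x \<inter> {y. fst y \<notin> C}) + sum snd (Bw D' x \<inter> {y. fst y \<in> C})"
  proof -
    have f: "finite (Bw D' x)" by (simp add: Bw_def B_def)
    have "Bw D' x - {y. fst y \<in> C} = Bw D' x \<inter> {y. fst y \<notin> C}" by blast
    then show ?thesis using sum.Int_Diff[OF f, of snd "{y. fst y \<in> C}"] by simp
  qed
  ultimately show "Vf D a x = Vf D' a x" unfolding Vf_def using p p' zero by simp
qed

lemma pair_zero:
  assumes "p \<noteq> q" "p \<in> A \<longleftrightarrow> q \<in> A" "snd p + snd q = (0::int)"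
  shows "sum snd (A \<inter> {p, q}) = 0"
proof (cases "p \<in> A")
  case True
  then have "A \<inter> {p, q} = {p, q}" using assms by auto
  then show ?thesis using assms by simp
next
  case False
  then have "A \<inter> {p, q} = {}" using assms by auto
  then show ?thesis by simp
qed

lemma cross_in: "(c, e) \<in> elems D \<Longrightarrow> c \<in> crossings D"
  unfolding crossings_elems by force

lemma r1_inv:
  assumes "wf D" "wf D'" "r1 D D'"
  shows "aff_poly D a = aff_poly D' a"
proof -
  obtain c e where ce: "c \<notin> crossings D" "e \<in> {-1, 1}" "delx {c} D' = comps D"
    "\<forall>x\<in>crossings D. sg D' x = sg D x" "adj D' (c, e) (c, - e)"
    using assms(3) unfolding r1_def by blast
  have cD': "c \<in> crossings D'" using adj_elems[OF ce(5)] cross_in by blast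
  have cr: "crossings D' = insert c (crossings D)"
    using del_crossings[OF ce(3)[symmetric]] cD' by auto
  have ne: "(c, e) \<noteq> (c, - e)" using ce(2) by auto
  have Vx: "Vf D a x = Vf D' a x \<and> fst (pos D x) = fst (pos D' x)" if x: "x \<in> elems D" for x
  proof -
    have xD': "x \<in> elems D'" and xc: "fst x \<noteq> c" using x del_elems[OF ce(3)[symmetric]] by auto
    have "Bw D' x \<inter> {y. fst y \<in> {c}} = Bw D' x \<inter> {(c, e), (c, - e)}"
    proof -
      have "y = (c, e) \<or> y = (c, - e)" if "y \<in> Bw D' x" "fst y = c" for y
      proof -
        have "snd y \<in> {-1, 1}" using wf_snd[OF assms(2)] Bw_sub[OF assms(2) xD'] that by blast
        then show ?thesis using that ce(2) by (cases y) auto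
      qed
      then show ?thesis by auto
    qed
    also have "sum snd \<dots> = 0"
    proof -
      have "x \<noteq> (c, - e)" using xc by auto
      then show ?thesis using pair_zero[OF ne adj_B[OF assms(2) ce(5) xD']] by simp
    qed
    finally show ?thesis using Del[OF assms(1,2) ce(3)[symmetric] x] by auto
  qed
  have tmeq: "tm D a x = tm D' a x" if x: "x \<in> crossings D" for x
  proof -
    have s: "sg D' x = sg D x" using ce(4) x by auto
    have sx: "sg D x \<in> {-1, 1}" using wf_sg[OF assms(1) x] .
    have e1: "(x, - sg D x) \<in> elems D" "(x, sg D x) \<in> elems D"
      using wf_cross_elem[OF assms(1) x] sx by auto
    have x': "x \<in> crossings D'" using cr x by auto
    show ?thesis unfolding tm_def W_Vf[OF assms(1) x] W_Vf[OF assms(2) x'] ocomp_def over_pos_def s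
      using Vx[OF e1(1)] Vx[OF e1(2)] by simp
  qed
  have tmc: "tm D' a c = (\<lambda>_. 0)"
  proof -
    have s: "sg D' c \<in> {-1, 1}" using wf_sg[OF assms(2) cD'] .
    have "W D' a c = 0"
      using W_Vf[OF assms(2) cD', of a] adj_V(1)[OF assms(2) ce(5), of a] s ce(2) by auto
    then show ?thesis by (auto simp: tm_def mono_def fun_eq_iff)
  qed
  show ?thesis
  proof
    fix m
    have "aff_poly D' a m = tm D' a c m + (\<Sum>x\<in>crossings D. tm D' a x m)"
      unfolding aff_tm cr using ce(1) finite_crossings by simp
    also have "\<dots> = aff_poly D a m" using tmc tmeq by (simp add: aff_tm)
    finally show "aff_poly D a m = aff_poly D' a m" by simp
  qed
qed


lemma pair_zero2:
  assumes "sum snd (A \<inter> {p1, q1}) = (0::int)" "sum snd (A \<inter> {p2, q2}) = 0"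
    "{p1, q1} \<inter> {p2, q2} = {}"
  shows "sum snd (A \<inter> {p1, q1, p2, q2}) = 0"
proof -
  have "A \<inter> {p1, q1, p2, q2} = (A \<inter> {p1, q1}) \<union> (A \<inter> {p2, q2})" by auto
  moreover have "(A \<inter> {p1, q1}) \<inter> (A \<inter> {p2, q2}) = {}" using assms(3) by auto
  ultimately show ?thesis using assms(1,2) by (simp add: sum.union_disjoint)
qed

lemma r2_inv:
  assumes "wf D" "wf D'" "r2 D D'"
  shows "aff_poly D a = aff_poly D' a"
proof -
  obtain c d where cd: "c \<noteq> d" "c \<notin> crossings D" "d \<notin> crossings D"
      "delx {c, d} D' = comps D" "\<forall>x\<in>crossings D. sg D' x = sg D x"
      "sg D' d = - sg D' c" "adj D' (c, - sg D' c) (d, sg D' c)"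
      "adj D' (c, sg D' c) (d, - sg D' c) \<or> adj D' (d, - sg D' c) (c, sg D' c)"
    using assms(3) unfolding r2_def by blast
  define s where "s = sg D' c"
  have cD': "c \<in> crossings D'" using adj_elems[OF cd(7)] cross_in by blast
  have dD': "d \<in> crossings D'" using adj_elems[OF cd(7)] cross_in by blast
  have s1: "s \<in> {-1, 1}" using wf_sg[OF assms(2) cD'] s_def by simp
  have cr: "crossings D' = insert c (insert d (crossings D))"
    using del_crossings[OF cd(4)[symmetric]] cD' dD' by auto
  have adj1: "adj D' (c, - s) (d, s)" using cd(7) s_def by simp
  obtain p2 q2 where pq: "adj D' p2 q2" "(p2 = (c, s) \<and> q2 = (d, - s)) \<or> (p2 = (d, - s) \<and> q2 = (c, s))"
    "\<And>a. Vf D' a (d, - s) = Vf D' a (c, s) + s"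
  proof (cases "adj D' (c, s) (d, - s)")
    case True
    then show ?thesis using that[of "(c, s)" "(d, - s)"] adj_V(1)[OF assms(2) True] by simp
  next
    case False
    then have A: "adj D' (d, - s) (c, s)" using cd(8) s_def by simp
    have "\<And>a. Vf D' a (d, - s) = Vf D' a (c, s) + s" using adj_V(1)[OF assms(2) A] by simp
    then show ?thesis using that[of "(d, - s)" "(c, s)"] A by blast
  qed
  have ne1: "(c, - s) \<noteq> (d, s)" and ne2: "p2 \<noteq> q2" using cd(1) pq(2) by auto
  have snd2: "snd p2 + snd q2 = 0" using pq(2) by auto
  have pq2: "{p2, q2} = {(c, s), (d, - s)}" using pq(2) by auto
  have Vx: "Vf D a x = Vf D' a x \<and> fst (pos D x) = fst (pos D' x)" if x: "x \<in> elems D" for x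
  proof -
    have xD': "x \<in> elems D'" and xc: "fst x \<notin> {c, d}" using x del_elems[OF cd(4)[symmetric]] by auto
    have "Bw D' x \<inter> {y. fst y \<in> {c, d}} = Bw D' x \<inter> {(c, - s), (d, s), p2, q2}"
    proof -
      have "y \<in> {(c, - s), (d, s), (c, s), (d, - s)}" if "y \<in> Bw D' x" "fst y \<in> {c, d}" for y
      proof -
        have "snd y \<in> {-1, 1}" using wf_snd[OF assms(2)] Bw_sub[OF assms(2) xD'] that by blast
        then show ?thesis using that s1 by (cases y) auto
      qed
      then show ?thesis unfolding pq2 by auto
    qed
    also have "sum snd \<dots> = 0"
    proof (rule pair_zero2)
      have "x \<noteq> (d, s)" using xc by auto
      then show "sum snd (Bw D' x \<inter> {(c, - s), (d, s)}) = 0"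
        using pair_zero[OF ne1 adj_B[OF assms(2) adj1 xD']] by simp
      have "x \<noteq> q2" using xc pq(2) by (cases x) auto
      then show "sum snd (Bw D' x \<inter> {p2, q2}) = 0"
        using pair_zero[OF ne2 adj_B[OF assms(2) pq(1) xD'] snd2] by simp
      show "{(c, - s), (d, s)} \<inter> {p2, q2} = {}" unfolding pq2 using cd(1) s1 by auto
    qed
    finally show ?thesis using Del[OF assms(1,2) cd(4)[symmetric] x] by auto
  qed
  have tmeq: "tm D a x = tm D' a x" if x: "x \<in> crossings D" for x
  proof -
    have s: "sg D' x = sg D x" using cd(5) x by auto
    have sx: "sg D x \<in> {-1, 1}" using wf_sg[OF assms(1) x] .
    have e1: "(x, - sg D x) \<in> elems D" "(x, sg D x) \<in> elems D"
      using wf_cross_elem[OF assms(1) x] sx by auto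
    have x': "x \<in> crossings D'" using cr x by auto
    show ?thesis unfolding tm_def W_Vf[OF assms(1) x] W_Vf[OF assms(2) x'] ocomp_def over_pos_def s
      using Vx[OF e1(1)] Vx[OF e1(2)] by simp
  qed
  have tmcd: "tm D' a c m + tm D' a d m = 0" for m
  proof -
    have sd: "sg D' d = - s" using cd(6) s_def by simp
    have Wc: "W D' a c = Vf D' a (c, - s) - Vf D' a (c, s) - s"
      using W_Vf[OF assms(2) cD'] s_def by simp
    have Wd: "W D' a d = Vf D' a (d, s) - Vf D' a (d, - s) + s"
      using W_Vf[OF assms(2) dD'] sd by simp
    have "W D' a d = W D' a c"
      using Wc Wd adj_V(1)[OF assms(2) adj1, of a] pq(3)[of a] by simp
    moreover have "ocomp D' d = ocomp D' c"
      unfolding ocomp_def over_pos_def using sd s_def adj_V(2)[OF assms(2) adj1] by simp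
    ultimately show ?thesis unfolding tm_def using sd s_def by simp
  qed
  show ?thesis
  proof
    fix m
    have "aff_poly D' a m = tm D' a c m + tm D' a d m + (\<Sum>x\<in>crossings D. tm D' a x m)"
      unfolding aff_tm cr using cd(1,2,3) finite_crossings by simp
    also have "\<dots> = aff_poly D a m" using tmcd tmeq by (simp add: aff_tm)
    finally show "aff_poly D a m = aff_poly D' a m" by simp
  qed
qed


lemma adj_bracket:
  assumes "wf D" "adj D u v" "w \<in> elems D"
  shows "(of_bool (u \<in> Bw D w) - of_bool (v \<in> Bw D w) :: int) = of_bool (w = v)"
proof (cases "w = v")
  case True
  then show ?thesis using adj_B2[OF assms(1,2)] by simp
next
  case False
  then show ?thesis using adj_B[OF assms False] by simp
qed

definition sig3 where
  "sig3 p1 q1 p2 q2 p3 q3 = swap2 p1 q1 \<circ> swap2 p2 q2 \<circ> swap2 p3 q3"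

lemma sig3_invol:
  assumes "distinct [p1, q1, p2, q2, p3, q3]"
  shows "sig3 p1 q1 p2 q2 p3 q3 (sig3 p1 q1 p2 q2 p3 q3 w) = w"
  using assms by (auto simp: sig3_def swap2_def)

lemma sig3_vals:
  assumes "distinct [p1, q1, p2, q2, p3, q3]"
  shows "sig3 p1 q1 p2 q2 p3 q3 p1 = q1" "sig3 p1 q1 p2 q2 p3 q3 q1 = p1"
        "sig3 p1 q1 p2 q2 p3 q3 p2 = q2" "sig3 p1 q1 p2 q2 p3 q3 q2 = p2"
        "sig3 p1 q1 p2 q2 p3 q3 p3 = q3" "sig3 p1 q1 p2 q2 p3 q3 q3 = p3"
        "w \<notin> {p1, q1, p2, q2, p3, q3} \<Longrightarrow> sig3 p1 q1 p2 q2 p3 q3 w = w"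
  using assms by (auto simp: sig3_def swap2_def)

lemma sig3_sum:
  fixes A :: "('a \<times> int) set"
  assumes "distinct [p1, q1, p2, q2, p3, q3]" "finite A"
  shows "(\<Sum>y\<in>A. snd (sig3 p1 q1 p2 q2 p3 q3 y) - snd y) =
     (snd q1 - snd p1) * (of_bool (p1 \<in> A) - of_bool (q1 \<in> A)) +
     (snd q2 - snd p2) * (of_bool (p2 \<in> A) - of_bool (q2 \<in> A)) +
     (snd q3 - snd p3) * (of_bool (p3 \<in> A) - of_bool (q3 \<in> A))"
proof -
  let ?s = "sig3 p1 q1 p2 q2 p3 q3"
  let ?S = "{p1, q1, p2, q2, p3, q3}"
  let ?f = "\<lambda>y. snd (?s y) - snd y"
  have "(\<Sum>y\<in>A. ?f y) = (\<Sum>y\<in>A \<inter> ?S. ?f y) + (\<Sum>y\<in>A - ?S. ?f y)"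
    using sum.Int_Diff[OF assms(2)] by blast
  moreover have "(\<Sum>y\<in>A - ?S. ?f y) = 0"
  proof (rule sum.neutral, rule ballI)
    fix y assume "y \<in> A - ?S"
    then have "?s y = y" using sig3_vals(7)[OF assms(1)] by blast
    then show "?f y = 0" by simp
  qed
  moreover have "(\<Sum>y\<in>A \<inter> ?S. ?f y) = (\<Sum>y\<in>?S \<inter> A. ?f y)" by (simp add: Int_commute)
  moreover have "\<dots> = (\<Sum>y\<in>?S. if y \<in> A then ?f y else 0)"
    by (rule sum.inter_restrict) simp
  moreover have "\<dots> = (snd q1 - snd p1) * (of_bool (p1 \<in> A) - of_bool (q1 \<in> A)) +
     (snd q2 - snd p2) * (of_bool (p2 \<in> A) - of_bool (q2 \<in> A)) +
     (snd q3 - snd p3) * (of_bool (p3 \<in> A) - of_bool (q3 \<in> A))"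
    using assms(1) sig3_vals[OF assms(1)] by (simp add: algebra_simps)
  ultimately show ?thesis by simp
qed


lemma map_elems:
  assumes "comps D' = map (map g) (comps D)"
  shows "elems D' = g ` elems D"
  using assms by (auto simp: elems_def)

lemma map_diag:
  assumes "wf D" "wf D'" "comps D' = map (map g) (comps D)" "inj_on g (elems D)" "y \<in> elems D"
  shows "fst (pos D' (g y)) = fst (pos D y)"
    "Vf D' a (g y) = absl (a (fst (pos D y))) + (\<Sum>z\<in>Bw D y. snd (g z))"
proof -
  obtain i where i: "i < length (comps D)" "y \<in> set (comps D ! i)"
    using assms(5) by (auto simp: elems_iff)
  have ci: "comps D' ! i = map g (comps D ! i)" using assms(3) i(1) by simp
  have i': "i < length (comps D')" "g y \<in> set (comps D' ! i)" using i ci assms(3) by auto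
  have p: "fst (pos D y) = i" using wf_pos_elem(1)[OF assms(1) i] .
  have p': "fst (pos D' (g y)) = i" using wf_pos_elem(1)[OF assms(2) i'] .
  show "fst (pos D' (g y)) = fst (pos D y)" using p p' by simp
  have sub: "insert y (set (comps D ! i)) \<subseteq> elems D" using i by (auto simp: elems_iff)
  have inj: "inj_on g (insert y (set (comps D ! i)))" using inj_on_subset[OF assms(4) sub] .
  have "Bw D' (g y) = g ` Bw D y"
    unfolding Bw_def p p' ci using B_map[OF inj] by simp
  moreover have "inj_on g (Bw D y)"
    using inj_on_subset[OF assms(4) Bw_sub[OF assms(1,5)]] .
  ultimately have "(\<Sum>z\<in>Bw D' (g y). snd z) = (\<Sum>z\<in>Bw D y. snd (g z))"
    by (simp add: sum.reindex)
  then show "Vf D' a (g y) = absl (a (fst (pos D y))) + (\<Sum>z\<in>Bw D y. snd (g z))"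
    unfolding Vf_def p p' by simp
qed

lemma rename_inv:
  assumes "wf D" "wf D'" "rename D D'"
  shows "aff_poly D a = aff_poly D' a"
proof -
  obtain f where f: "inj_on f (crossings D)" "comps D' = map (map (apfst f)) (comps D)"
    "\<forall>c\<in>crossings D. sg D' (f c) = sg D c"
    using assms(3) unfolding rename_def by blast
  have inj: "inj_on (apfst f) (elems D)"
  proof (rule inj_onI)
    fix u v assume "u \<in> elems D" "v \<in> elems D" "apfst f u = apfst f v"
    moreover have "fst u \<in> crossings D" "fst v \<in> crossings D"
      using \<open>u \<in> elems D\<close> \<open>v \<in> elems D\<close> unfolding crossings_elems by auto
    ultimately show "u = v" using f(1) by (cases u, cases v) (auto dest: inj_onD)
  qed
  have cr: "crossings D' = f ` crossings D"
    unfolding crossings_elems map_elems[OF f(2)] by (force simp: image_iff)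
  have V: "Vf D' a (apfst f y) = Vf D a y" "fst (pos D' (apfst f y)) = fst (pos D y)"
    if "y \<in> elems D" for y
    using map_diag(1)[OF assms(1,2) f(2) inj that] map_diag(2)[OF assms(1,2) f(2) inj that, of a]
    by (simp_all add: Vf_def)
  have tmeq: "tm D' a (f c) = tm D a c" if c: "c \<in> crossings D" for c
  proof -
    have s: "sg D' (f c) = sg D c" using f(3) c by auto
    have sx: "sg D c \<in> {-1, 1}" using wf_sg[OF assms(1) c] .
    have e1: "(c, - sg D c) \<in> elems D" "(c, sg D c) \<in> elems D"
      using wf_cross_elem[OF assms(1) c] sx by auto
    have c': "f c \<in> crossings D'" using cr c by auto
    have a1: "apfst f (c, - sg D c) = (f c, - sg D c)" "apfst f (c, sg D c) = (f c, sg D c)" by simp_all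
    show ?thesis unfolding tm_def W_Vf[OF assms(1) c] W_Vf[OF assms(2) c'] ocomp_def over_pos_def s
      using V[OF e1(1)] V[OF e1(2)] a1 by simp
  qed
  show ?thesis
  proof
    fix m
    have "aff_poly D' a m = (\<Sum>c\<in>crossings D. tm D' a (f c) m)"
      unfolding aff_tm cr using f(1) by (simp add: sum.reindex)
    also have "\<dots> = aff_poly D a m" using tmeq by (simp add: aff_tm)
    finally show "aff_poly D a m = aff_poly D' a m" by simp
  qed
qed



lemma r3_inv:
  assumes wfD: "wf D" and wfD': "wf D'" and r: "r3 D D'"
  shows "aff_poly D a = aff_poly D' a"
proof -
  obtain x y z eT eM eB where d: "distinct [x, y, z]" and sgD: "sg D' = sg D"
    and hT: "(eT = 1 \<and> adj D (x, - sg D x) (y, - sg D y)) \<or> (eT = -1 \<and> adj D (y, - sg D y) (x, - sg D x))"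
    and hM: "(eM = 1 \<and> adj D (x, sg D x) (z, - sg D z)) \<or> (eM = -1 \<and> adj D (z, - sg D z) (x, sg D x))"
    and hB: "(eB = 1 \<and> adj D (y, sg D y) (z, sg D z)) \<or> (eB = -1 \<and> adj D (z, sg D z) (y, sg D y))"
    and s1: "sg D x * sg D y = eM * eB" and s2: "sg D x * sg D z = eT * eB"
    and cD': "comps D' = map (map (sig3 (x, - sg D x) (y, - sg D y) (x, sg D x) (z, - sg D z) (y, sg D y) (z, sg D z))) (comps D)"
    using r unfolding r3_def Let_def sig3_def by blast
  let ?Tx = "(x, - sg D x)" and ?Ty = "(y, - sg D y)" and ?Mx = "(x, sg D x)"
    and ?Mz = "(z, - sg D z)" and ?By = "(y, sg D y)" and ?Bz = "(z, sg D z)"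
  let ?s = "sig3 ?Tx ?Ty ?Mx ?Mz ?By ?Bz"
  have adjT: "adj D ?Tx ?Ty \<or> adj D ?Ty ?Tx" using hT by blast
  have adjM: "adj D ?Mx ?Mz \<or> adj D ?Mz ?Mx" using hM by blast
  have adjB: "adj D ?By ?Bz \<or> adj D ?Bz ?By" using hB by blast
  have el: "?Tx \<in> elems D" "?Ty \<in> elems D" "?Mx \<in> elems D" "?Mz \<in> elems D" "?By \<in> elems D" "?Bz \<in> elems D"
    using adjT adjM adjB adj_elems by blast+
  have xC: "x \<in> crossings D" and yC: "y \<in> crossings D" and zC: "z \<in> crossings D"
    using el cross_in by blast+
  have sx: "sg D x \<in> {-1, 1}" and sy: "sg D y \<in> {-1, 1}" and sz: "sg D z \<in> {-1, 1}"
    using wf_sg[OF wfD] xC yC zC by blast+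
  have dist6: "distinct [?Tx, ?Ty, ?Mx, ?Mz, ?By, ?Bz]" using d sx sy sz by auto
  have inv: "\<And>w. ?s (?s w) = w" using sig3_invol[OF dist6] .
  have injs: "inj_on ?s (elems D)" by (rule inj_onI) (metis inv)
  have sE: "?s w \<in> elems D" if "w \<in> elems D" for w
  proof (cases "w \<in> {?Tx, ?Ty, ?Mx, ?Mz, ?By, ?Bz}")
    case True
    then show ?thesis using sig3_vals[OF dist6] el by auto
  next
    case False
    then show ?thesis using sig3_vals(7)[OF dist6 False] that by simp
  qed
  have elD': "elems D' = elems D"
  proof -
    have "elems D' = ?s ` elems D" using map_elems[OF cD'] .
    moreover have "?s ` elems D = elems D"
    proof
      show "?s ` elems D \<subseteq> elems D" using sE by blast
      show "elems D \<subseteq> ?s ` elems D"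
      proof
        fix w assume "w \<in> elems D"
        then show "w \<in> ?s ` elems D" using sE inv by (metis imageI)
      qed
    qed
    ultimately show ?thesis by simp
  qed
  have cr: "crossings D' = crossings D" by (simp add: crossings_elems elD')
  define KT where "KT w0 = (of_bool (?Tx \<in> Bw D w0) - of_bool (?Ty \<in> Bw D w0) :: int)" for w0
  define KM where "KM w0 = (of_bool (?Mx \<in> Bw D w0) - of_bool (?Mz \<in> Bw D w0) :: int)" for w0
  define KB where "KB w0 = (of_bool (?By \<in> Bw D w0) - of_bool (?Bz \<in> Bw D w0) :: int)" for w0
  have VD': "Vf D' a w = Vf D a (?s w) + (snd ?Ty - snd ?Tx) * KT (?s w)
      + (snd ?Mz - snd ?Mx) * KM (?s w) + (snd ?Bz - snd ?By) * KB (?s w)"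
    and PD': "fst (pos D' w) = fst (pos D (?s w))" if w: "w \<in> elems D" for w
  proof -
    let ?y = "?s w"
    have y: "?y \<in> elems D" using sE[OF w] .
    have "Vf D' a (?s ?y) = absl (a (fst (pos D ?y))) + (\<Sum>z\<in>Bw D ?y. snd (?s z))"
      using map_diag(2)[OF wfD wfD' cD' injs y] .
    moreover have "(\<Sum>z\<in>Bw D ?y. snd (?s z)) = (\<Sum>z\<in>Bw D ?y. snd z) + (\<Sum>z\<in>Bw D ?y. snd (?s z) - snd z)"
      by (simp add: sum_subtractf)
    moreover have "finite (Bw D ?y)" by (simp add: Bw_def B_def)
    ultimately show "Vf D' a w = Vf D a (?s w) + (snd ?Ty - snd ?Tx) * KT (?s w)
      + (snd ?Mz - snd ?Mx) * KM (?s w) + (snd ?Bz - snd ?By) * KB (?s w)"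
      using sig3_sum[OF dist6] inv[of w] unfolding KT_def KM_def KB_def Vf_def by simp
    show "fst (pos D' w) = fst (pos D (?s w))"
      using map_diag(1)[OF wfD wfD' cD' injs y] inv[of w] by simp
  qed
  have KTv: "KT w0 = (if eT = 1 then of_bool (w0 = ?Ty) else - of_bool (w0 = ?Tx))" if "w0 \<in> elems D" for w0
    using hT adj_bracket[OF wfD _ that] unfolding KT_def by fastforce
  have KMv: "KM w0 = (if eM = 1 then of_bool (w0 = ?Mz) else - of_bool (w0 = ?Mx))" if "w0 \<in> elems D" for w0
    using hM adj_bracket[OF wfD _ that] unfolding KM_def by fastforce
  have KBv: "KB w0 = (if eB = 1 then of_bool (w0 = ?Bz) else - of_bool (w0 = ?By))" if "w0 \<in> elems D" for w0
    using hB adj_bracket[OF wfD _ that] unfolding KB_def by fastforce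
  have sx0: "sg D x \<noteq> 0" and sy0: "sg D y \<noteq> 0" and sz0: "sg D z \<noteq> 0" using sx sy sz by auto
  have dxy: "x \<noteq> y" "x \<noteq> z" "y \<noteq> z" using d by auto
  have V'Tx: "Vf D' a ?Tx = Vf D a ?Ty + (sg D x - sg D y) * (if eT = 1 then 1 else 0)"
    using VD'[OF el(1)] sig3_vals(1)[OF dist6] KTv[OF el(2)] KMv[OF el(2)] KBv[OF el(2)] sx0 sy0 sz0 dxy
    by simp
  have V'Ty: "Vf D' a ?Ty = Vf D a ?Tx + (sg D x - sg D y) * (if eT = 1 then 0 else -1)"
    using VD'[OF el(2)] sig3_vals(2)[OF dist6] KTv[OF el(1)] KMv[OF el(1)] KBv[OF el(1)] sx0 sy0 sz0 dxy
    by simp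
  have V'Mx: "Vf D' a ?Mx = Vf D a ?Mz + (- sg D z - sg D x) * (if eM = 1 then 1 else 0)"
    using VD'[OF el(3)] sig3_vals(3)[OF dist6] KTv[OF el(4)] KMv[OF el(4)] KBv[OF el(4)] sx0 sy0 sz0 dxy
    by simp
  have V'Mz: "Vf D' a ?Mz = Vf D a ?Mx + (- sg D z - sg D x) * (if eM = 1 then 0 else -1)"
    using VD'[OF el(4)] sig3_vals(4)[OF dist6] KTv[OF el(3)] KMv[OF el(3)] KBv[OF el(3)] sx0 sy0 sz0 dxy
    by simp
  have V'By: "Vf D' a ?By = Vf D a ?Bz + (sg D z - sg D y) * (if eB = 1 then 1 else 0)"
    using VD'[OF el(5)] sig3_vals(5)[OF dist6] KTv[OF el(6)] KMv[OF el(6)] KBv[OF el(6)] sx0 sy0 sz0 dxy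
    by simp
  have V'Bz: "Vf D' a ?Bz = Vf D a ?By + (sg D z - sg D y) * (if eB = 1 then 0 else -1)"
    using VD'[OF el(6)] sig3_vals(6)[OF dist6] KTv[OF el(5)] KMv[OF el(5)] KBv[OF el(5)] sx0 sy0 sz0 dxy
    by simp
  have eT: "eT = 1 \<or> eT = -1" using hT by blast
  have eM: "eM = 1 \<or> eM = -1" using hM by blast
  have eB: "eB = 1 \<or> eB = -1" using hB by blast
  have AT1: "eT = 1 \<Longrightarrow> Vf D a ?Ty = Vf D a ?Tx - sg D x"
    using hT adj_V(1)[OF wfD, of ?Tx ?Ty a] by auto
  have AT2: "eT = -1 \<Longrightarrow> Vf D a ?Tx = Vf D a ?Ty - sg D y"
    using hT adj_V(1)[OF wfD, of ?Ty ?Tx a] by auto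
  have AM1: "eM = 1 \<Longrightarrow> Vf D a ?Mz = Vf D a ?Mx + sg D x"
    using hM adj_V(1)[OF wfD, of ?Mx ?Mz a] by auto
  have AM2: "eM = -1 \<Longrightarrow> Vf D a ?Mx = Vf D a ?Mz - sg D z"
    using hM adj_V(1)[OF wfD, of ?Mz ?Mx a] by auto
  have AB1: "eB = 1 \<Longrightarrow> Vf D a ?Bz = Vf D a ?By + sg D y"
    using hB adj_V(1)[OF wfD, of ?By ?Bz a] by auto
  have AB2: "eB = -1 \<Longrightarrow> Vf D a ?By = Vf D a ?Bz + sg D z"
    using hB adj_V(1)[OF wfD, of ?Bz ?By a] by auto
  have PT: "fst (pos D ?Ty) = fst (pos D ?Tx)" using adjT adj_V(2)[OF wfD] by metis
  have PM: "fst (pos D ?Mz) = fst (pos D ?Mx)" using adjM adj_V(2)[OF wfD] by metis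
  have sx': "sg D x = 1 \<or> sg D x = -1" and sy': "sg D y = 1 \<or> sg D y = -1"
    and sz': "sg D z = 1 \<or> sg D z = -1" using sx sy sz by auto
  have Wx: "W D' a x = W D a x"
  proof -
    have "W D' a x = Vf D' a ?Tx - Vf D' a ?Mx - sg D x"
      using W_Vf[OF wfD', of x a] xC cr sgD by simp
    moreover have "W D a x = Vf D a ?Tx - Vf D a ?Mx - sg D x"
      using W_Vf[OF wfD xC] by simp
    ultimately show ?thesis using V'Tx V'Mx AT1 AT2 AM1 AM2 s1 s2 eT eM eB sx' sy' sz'
      by (elim disjE) (simp_all add: algebra_simps)
  qed
  have Wy: "W D' a y = W D a y"
  proof -
    have "W D' a y = Vf D' a ?Ty - Vf D' a ?By - sg D y"
      using W_Vf[OF wfD', of y a] yC cr sgD by simp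
    moreover have "W D a y = Vf D a ?Ty - Vf D a ?By - sg D y"
      using W_Vf[OF wfD yC] by simp
    ultimately show ?thesis using V'Ty V'By AT1 AT2 AB1 AB2 s1 s2 eT eM eB sx' sy' sz'
      by (elim disjE) (simp_all add: algebra_simps)
  qed
  have Wz: "W D' a z = W D a z"
  proof -
    have "W D' a z = Vf D' a ?Mz - Vf D' a ?Bz - sg D z"
      using W_Vf[OF wfD', of z a] zC cr sgD by simp
    moreover have "W D a z = Vf D a ?Mz - Vf D a ?Bz - sg D z"
      using W_Vf[OF wfD zC] by simp
    ultimately show ?thesis using V'Mz V'Bz AM1 AM2 AB1 AB2 s1 s2 eT eM eB sx' sy' sz'
      by (elim disjE) (simp_all add: algebra_simps)
  qed
  have tmeq: "tm D' a c = tm D a c" if c: "c \<in> crossings D" for c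
  proof -
    have sc: "sg D c \<in> {-1, 1}" using wf_sg[OF wfD c] .
    have e1: "(c, - sg D c) \<in> elems D" "(c, sg D c) \<in> elems D"
      using wf_cross_elem[OF wfD c] sc by auto
    have c': "c \<in> crossings D'" using cr c by simp
    have oc: "ocomp D' c = fst (pos D (?s (c, - sg D c)))"
      unfolding ocomp_def over_pos_def sgD using PD'[OF e1(1)] .
    have "ocomp D' c = ocomp D c \<and> W D' a c = W D a c"
    proof (cases "c = x \<or> c = y \<or> c = z")
      case True
      then show ?thesis
      proof (elim disjE)
        assume "c = x" then show ?thesis
          using oc Wx sig3_vals(1)[OF dist6] PT by (simp add: ocomp_def over_pos_def)
      next
        assume "c = y" then show ?thesis
          using oc Wy sig3_vals(2)[OF dist6] PT by (simp add: ocomp_def over_pos_def)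
      next
        assume "c = z" then show ?thesis
          using oc Wz sig3_vals(4)[OF dist6] PM by (simp add: ocomp_def over_pos_def)
      qed
    next
      case False
      have f1: "?s (c, - sg D c) = (c, - sg D c)" "?s (c, sg D c) = (c, sg D c)"
        using sig3_vals(7)[OF dist6] False by auto
      have "Vf D' a (c, - sg D c) = Vf D a (c, - sg D c)"
        using VD'[OF e1(1)] f1 KTv[OF e1(1)] KMv[OF e1(1)] KBv[OF e1(1)] False by simp
      moreover have "Vf D' a (c, sg D c) = Vf D a (c, sg D c)"
        using VD'[OF e1(2)] f1 KTv[OF e1(2)] KMv[OF e1(2)] KBv[OF e1(2)] False by simp
      ultimately show ?thesis
        using oc f1 W_Vf[OF wfD c, of a] W_Vf[OF wfD' c', of a] sgD
        by (simp add: ocomp_def over_pos_def)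
    qed
    then show ?thesis unfolding tm_def sgD by simp
  qed
  show ?thesis
  proof
    fix m
    show "aff_poly D a m = aff_poly D' a m"
      unfolding aff_tm cr using tmeq by simp
  qed
qed


lemma rmove_inv: "rmove D D' \<Longrightarrow> aff_poly D a = aff_poly D' a"
  unfolding rmove_def using r1_inv r2_inv r3_inv rename_inv by blast

lemma requiv_inv:
  assumes "requiv D D'"
  shows "aff_poly D a = aff_poly D' a"
  using assms unfolding requiv_def
proof (induction rule: rtranclp_induct)
  case base
  then show ?case by simp
next
  case (step y z)
  then show ?case using rmove_inv[of y z a] rmove_inv[of z y a] by auto
qed

lemma pos_upd: "pos (D\<lparr>sg := g\<rparr>) = pos D"
  by (simp add: pos_def passages_def at_def fun_eq_iff)

lemma self_pass_upd: "self_pass (D\<lparr>sg := g\<rparr>) = self_pass D"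
  by (simp add: self_pass_def pos_upd at_def fun_eq_iff)

lemma at_upd: "at (D\<lparr>sg := g\<rparr>) = at D"
  by (simp add: at_def fun_eq_iff)

lemma lab_upd: "lab (D\<lparr>sg := g\<rparr>) = lab D"
  unfolding lab_def self_pass_upd at_upd by (rule refl)

lemma crossings_upd: "crossings (D\<lparr>sg := g\<rparr>) = crossings D"
  by (simp add: crossings_def passages_def at_def)

lemma tm_upd: "tm (D\<lparr>sg := g\<rparr>) a c m = tm (D\<lparr>sg := (\<lambda>_. g c)\<rparr>) a c m"
  by (simp add: tm_def W_def ocomp_def over_pos_def under_pos_def pos_upd lab_upd)

lemma alt_zero:
  fixes F :: "nat set \<Rightarrow> int"
  assumes "finite S" "d \<in> S" "\<And>P. P \<subseteq> S - {d} \<Longrightarrow> F (insert d P) = F P"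
  shows "(\<Sum>P\<in>Pow S. (-1) ^ card (S - P) * F P) = 0"
proof -
  let ?S0 = "S - {d}"
  have S: "S = insert d ?S0" using assms(2) by auto
  have f0: "finite ?S0" using assms(1) by simp
  have PS: "Pow S = Pow ?S0 \<union> insert d ` Pow ?S0" using Pow_insert S by metis
  have disj: "Pow ?S0 \<inter> insert d ` Pow ?S0 = {}" by auto
  have inj: "inj_on (insert d) (Pow ?S0)" unfolding inj_on_def by blast
  have "(\<Sum>P\<in>Pow S. (-1) ^ card (S - P) * F P)
      = (\<Sum>P\<in>Pow ?S0. (-1) ^ card (S - P) * F P) + (\<Sum>P\<in>insert d ` Pow ?S0. (-1) ^ card (S - P) * F P)"
    unfolding PS using f0 disj by (simp add: sum.union_disjoint)
  also have "(\<Sum>P\<in>insert d ` Pow ?S0. (-1) ^ card (S - P) * F P)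
      = (\<Sum>P\<in>Pow ?S0. (-1) ^ card (S - insert d P) * F (insert d P))"
    using inj by (simp add: sum.reindex)
  also have "(\<Sum>P\<in>Pow ?S0. (-1) ^ card (S - P) * F P) + \<dots> =
      (\<Sum>P\<in>Pow ?S0. (-1) ^ card (S - P) * F P + (-1) ^ card (S - insert d P) * F (insert d P))"
    by (simp add: sum.distrib)
  also have "\<dots> = 0"
  proof (rule sum.neutral, rule ballI)
    fix P assume P: "P \<in> Pow ?S0"
    have c1: "S - insert d P = ?S0 - P" using P by auto
    have c2: "S - P = insert d (?S0 - P)" using P assms(2) by auto
    have "card (S - P) = Suc (card (?S0 - P))" unfolding c2 using f0 by simp
    then show "(-1) ^ card (S - P) * F P + (-1) ^ card (S - insert d P) * F (insert d P) = (0::int)"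
      unfolding c1 using assms(3)[of P] P by simp
  qed
  finally show ?thesis .
qed

lemma vorder_le1: "vorder_le aff_poly 1"
  unfolding vorder_le_def
proof (intro allI impI)
  fix D :: gdiag and S :: "nat set" and a m
  assume H: "wf D \<and> S \<subseteq> crossings D \<and> 1 < card S"
  have "0 < card S" using H by simp
  then have fS: "finite S" by (simp add: card_gt_0_iff)
  let ?r = "\<lambda>P c. if c \<in> S then (if c \<in> P then 1 else -1) else sg D c"
  let ?h = "\<lambda>c v. tm (D\<lparr>sg := (\<lambda>_. v)\<rparr>) a c m"
  have ap: "aff_poly (resolve D S P) a m = (\<Sum>c\<in>crossings D. ?h c (?r P c))" for P
    unfolding aff_tm
  proof (rule sum.cong)
    show "crossings (resolve D S P) = crossings D" unfolding resolve_def by (rule crossings_upd)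
  next
    fix c assume "c \<in> crossings D"
    show "tm (resolve D S P) a c m = ?h c (?r P c)" unfolding resolve_def by (subst tm_upd) simp
  qed
  have "vext aff_poly D S a m = (\<Sum>P\<in>Pow S. \<Sum>c\<in>crossings D. (-1) ^ card (S - P) * ?h c (?r P c))"
    unfolding vext_def ap by (simp add: sum_distrib_left)
  also have "\<dots> = (\<Sum>c\<in>crossings D. \<Sum>P\<in>Pow S. (-1) ^ card (S - P) * ?h c (?r P c))"
    by (rule sum.swap)
  also have "\<dots> = 0"
  proof (rule sum.neutral, rule ballI)
    fix c assume "c \<in> crossings D"
    have "\<not> S \<subseteq> {c}"
    proof
      assume "S \<subseteq> {c}"
      then have "card S \<le> card {c}" by (rule card_mono[rotated]) simp
      then show False using H by simp
    qed
    then obtain d where d: "d \<in> S" "d \<noteq> c" by blast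
    show "(\<Sum>P\<in>Pow S. (-1) ^ card (S - P) * ?h c (?r P c)) = 0"
      by (rule alt_zero[OF fS d(1)]) (use d(2) in simp)
  qed
  finally show "vext aff_poly D S a m = 0" .
qed


definition Eg :: "(nat \<Rightarrow> int) \<Rightarrow> gdiag" where
  "Eg g = \<lparr>comps = [[(0, -1)], [(0, 1)]], sg = g\<rparr>"

lemma Eg_sg[simp]: "sg (Eg g) = g"
  by (simp add: Eg_def)

lemma Eg_passages: "passages (Eg g) = {(0, 0), (1, 0)}"
proof -
  have c: "comps (Eg g) = [[(0, -1)], [(0, 1)]]" by (simp add: Eg_def)
  show ?thesis
  proof
    show "passages (Eg g) \<subseteq> {(0, 0), (1, 0)}"
    proof
      fix q assume "q \<in> passages (Eg g)"
      then obtain i k where q: "q = (i, k)" "i < 2" "k < length ([[(0::nat, -1::int)], [(0, 1)]] ! i)"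
        unfolding passages_def c by auto
      then have "i = 0 \<or> i = 1" by auto
      then show "q \<in> {(0, 0), (1, 0)}" using q by auto
    qed
    show "{(0, 0), (1, 0)} \<subseteq> passages (Eg g)" unfolding passages_def c by simp
  qed
qed

lemma Eg_crossings: "crossings (Eg g) = {0}"
proof -
  have "crossings (Eg g) = {fst (at (Eg g) (0, 0)), fst (at (Eg g) (1, 0))}"
    unfolding crossings_def Eg_passages by simp
  also have "\<dots> = {0}" by (simp add: at_def Eg_def)
  finally show ?thesis .
qed

lemma Eg_wf:
  assumes "g 0 \<in> {-1, 1}"
  shows "wf (Eg g)"
proof -
  have a0: "at (Eg g) (0, 0) = (0, -1)" and a1: "at (Eg g) (1, 0) = (0, 1)"
    by (simp_all add: at_def Eg_def)
  have u: "\<exists>!q. q \<in> passages (Eg g) \<and> at (Eg g) q = (0, e)" if e: "e \<in> {-1, 1}" for e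
  proof (cases "e = -1")
    case True
    show ?thesis
    proof (rule ex1I[of _ "(0, 0)"])
      show "(0, 0) \<in> passages (Eg g) \<and> at (Eg g) (0, 0) = (0, e)" using a0 True Eg_passages by simp
      fix q assume "q \<in> passages (Eg g) \<and> at (Eg g) q = (0, e)"
      then have "q = (0, 0) \<or> q = (1, 0)" "at (Eg g) q = (0, e)" using Eg_passages by auto
      then show "q = (0, 0)" using a1 True by auto
    qed
  next
    case False
    then have e1: "e = 1" using e by simp
    show ?thesis
    proof (rule ex1I[of _ "(1, 0)"])
      show "(1, 0) \<in> passages (Eg g) \<and> at (Eg g) (1, 0) = (0, e)" using a1 e1 Eg_passages by simp
      fix q assume "q \<in> passages (Eg g) \<and> at (Eg g) q = (0, e)"
      then have "q = (0, 0) \<or> q = (1, 0)" "at (Eg g) q = (0, e)" using Eg_passages by auto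
      then show "q = (1, 0)" using a0 e1 by auto
    qed
  qed
  have u1: "\<exists>!q. q \<in> {(0, 0), (1, 0)} \<and> at (Eg g) q = (0, -1)" using u[of "-1"] Eg_passages by simp
  have u2: "\<exists>!q. q \<in> {(0, 0), (1, 0)} \<and> at (Eg g) q = (0, 1)" using u[of "1"] Eg_passages by simp
  have "\<forall>e\<in>{-1::int, 1}. \<exists>!q. q \<in> passages (Eg g) \<and> at (Eg g) q = (0, e)"
    unfolding Eg_passages using u1 u2 by blast
  then show ?thesis
    unfolding wf_def Eg_crossings using a0 a1 assms by (simp add: Eg_passages)
qed

lemma Eg_tm:
  assumes "g 0 \<in> {-1, 1}"
  shows "tm (Eg g) (\<lambda>_. (0, 0)) 0 m = g 0 * ((if m = mono (if g 0 = 1 then 0 else 1) (- g 0) then 1 else 0)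
      - (if m = (\<lambda>_. 0) then 1 else 0))"
proof -
  have wf: "wf (Eg g)" using Eg_wf[of g, OF assms] .
  have c: "0 \<in> crossings (Eg g)" by (simp add: Eg_crossings)
  have len: "length (comps (Eg g)) = 2" "length (comps (Eg g) ! 0) = 1" "length (comps (Eg g) ! 1) = 1"
    by (simp_all add: Eg_def)
  have n: "comps (Eg g) ! 0 ! 0 = (0, -1)" "comps (Eg g) ! 1 ! 0 = (0, 1)" by (simp_all add: Eg_def)
  have p0: "pos (Eg g) (0, -1) = (0, 0)" using wf_pos_nth[OF wf, of 0 0] len n by simp
  have p1: "pos (Eg g) (0, 1) = (1, 0)" using wf_pos_nth[OF wf, of 1 0] by (simp add: Eg_def)
  have b0: "Bw (Eg g) (0, -1) = {}" using Bw_nth[OF wf, of 0 0] len n by simp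
  have b1: "Bw (Eg g) (0, 1) = {}" using Bw_nth[OF wf, of 1 0] by (simp add: Eg_def)
  have V: "Vf (Eg g) (\<lambda>_. (0, 0)) (0, -1) = 0" "Vf (Eg g) (\<lambda>_. (0, 0)) (0, 1) = 0"
    unfolding Vf_def using b0 b1 by (simp_all add: absl_def)
  have "W (Eg g) (\<lambda>_. (0, 0)) 0 = - g 0"
    using W_Vf[OF wf c, of "\<lambda>_. (0, 0)"] V assms by auto
  moreover have "ocomp (Eg g) 0 = (if g 0 = 1 then 0 else 1)"
    unfolding ocomp_def over_pos_def using p0 p1 assms by auto
  ultimately show ?thesis unfolding tm_def by simp
qed

lemma not_vorder_le0: "\<not> vorder_le aff_poly 0"
proof
  assume H: "vorder_le aff_poly 0"
  let ?E = "Eg (\<lambda>_. 1)"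
  let ?m = "mono 0 (-1)"
  have wf: "wf ?E" by (rule Eg_wf) simp
  have "vext aff_poly ?E {0} (\<lambda>_. (0, 0)) ?m = 0"
    using H wf unfolding vorder_le_def by (simp add: Eg_crossings)
  moreover have r0: "resolve ?E {0} {} = Eg (\<lambda>c. if c = 0 then -1 else 1)"
    by (simp add: resolve_def Eg_def fun_eq_iff)
  moreover have r1: "resolve ?E {0} {0} = Eg (\<lambda>_. 1)"
    by (simp add: resolve_def Eg_def fun_eq_iff)
  moreover have "Pow {0::nat} = {{}, {0}}" by auto
  moreover have ne1: "?m \<noteq> mono 1 1"
  proof
    assume "?m = mono 1 1"
    then have "?m 0 = mono 1 1 0" by simp
    then show False by (simp add: mono_def)
  qed
  moreover have ne2: "?m \<noteq> (\<lambda>_. 0)"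
  proof
    assume "?m = (\<lambda>_. 0)"
    then have "?m 0 = 0" by simp
    then show False by (simp add: mono_def)
  qed
  moreover have "aff_poly (Eg (\<lambda>c. if c = 0 then -1 else 1)) (\<lambda>_. (0, 0)) ?m = 0"
    unfolding aff_tm Eg_crossings using Eg_tm[of "\<lambda>c. if c = 0 then -1 else 1" ?m] ne1 ne2 by simp
  moreover have "aff_poly (Eg (\<lambda>_. 1)) (\<lambda>_. (0, 0)) ?m = 1"
    unfolding aff_tm Eg_crossings using Eg_tm[of "\<lambda>_. 1" ?m] ne2 by simp
  ultimately show False
    by (simp add: vext_def)
qed

theorem proposition6:
  shows "(\<forall>D D' a. wf D \<and> requiv D D' \<longrightarrow> aff_poly D a = aff_poly D' a)
         \<and> vorder_one aff_poly"
  unfolding vorder_one_def using requiv_inv vorder_le1 not_vorder_le0 by blast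

end
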